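(* For real $a$ and $t>0$, $$K_0(t)\,\operatorname{ber}(a\sqrt{t})=\int_0^{\infty}(1+y^2)^{-1/2}J_0\!\left(\frac14\frac{a^2}{1+y^2}\right)\cosh\!\left(\frac14\frac{a^2y}{1+y^2}\right)\cos(ty)\,dy .$$
   Context: $K_0$ is the Macdonald function and $J_0$ the Bessel function of order $0$. The Kelvin function $\operatorname{ber}(x)=\sum_{k\ge0}\frac{(-1)^k (x/2)^{4k}}{((2k)!)^2}$. *)

theory Defs
  imports "HOL-Analysis.Analysis"
begin

definition besselJ0 :: "real \<Rightarrow> real" where
  "besselJ0 x = (\<Sum>k. (-1)^k * (x/2)^(2*k) / (fact k)^2)"

definition besselK0 :: "real \<Rightarrow> real" where
  "besselK0 t = integral {0..} (\<lambda>u. exp (- t * cosh u))"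

definition ber :: "real \<Rightarrow> real" where
  "ber x = (\<Sum>k. (-1)^k * (x/2)^(4*k) / (fact (2*k))^2)"

end

theory Submission
  imports Defs "HOL-Complex_Analysis.Complex_Analysis"
begin

lemma Ici_not_cbox: "\<not> (\<exists>a b. {0::real..} = cbox a b)"
proof
  assume "\<exists>a b. {0::real..} = cbox a b"
  then obtain a b where ab: "{0::real..} = cbox a b" by blast
  have "max 0 (b+1) \<in> {0::real..}" by simp
  then show False using ab by auto
qed

lemma improper_from_lim:
  fixes f :: "real \<Rightarrow> real"
  assumes int: "\<And>b. f integrable_on {0..b}"
    and lim: "((\<lambda>b. integral {0..b} f) \<longlongrightarrow> L) at_top"
  shows "(f has_integral L) {0..}"
proof (rule has_integral_alt[of f L "{0..}", THEN iffD2], simp only: Ici_not_cbox if_False, intro allI impI)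
  fix e :: real assume e: "e > 0"
  from lim[unfolded tendsto_iff] e have "\<forall>\<^sub>F b in at_top. dist (integral {0..b} f) L < e" by blast
  then obtain B0 where B0: "\<And>b. b \<ge> B0 \<Longrightarrow> dist (integral {0..b} f) L < e"
    by (auto simp: eventually_at_top_linorder)
  define B where "B = max B0 1 + 1"
  show "\<exists>B>0. \<forall>a b. ball 0 B \<subseteq> cbox a b \<longrightarrow>
      (\<exists>z. ((\<lambda>x. if x \<in> {0..} then f x else 0) has_integral z) (cbox a b) \<and> norm (z - L) < e)"
  proof (rule exI[of _ B], intro conjI allI impI)
    show "B > 0" by (simp add: B_def)
    fix a b :: real assume sub: "ball 0 B \<subseteq> cbox a b"
    have "B - 1 \<in> ball 0 B" "0 \<in> ball 0 B" using \<open>B > 0\<close> by (auto simp: B_def)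
    then have "B - 1 \<in> cbox a b" "0 \<in> cbox a b" using sub by blast+
    then have ab: "a \<le> 0" "B - 1 \<le> b" by auto
    then have bB0: "b \<ge> B0" by (simp add: B_def)
    have "(f has_integral integral {0..b} f) {0..b}" using int by blast
    then have "((\<lambda>x. if x \<in> {0..b} then f x else 0) has_integral integral {0..b} f) {a..b}"
      using ab by (subst has_integral_restrict) auto
    then have "((\<lambda>x. if x \<in> {0..} then f x else 0) has_integral integral {0..b} f) {a..b}"
      by (rule has_integral_eq[rotated]) auto
    then show "\<exists>z. ((\<lambda>x. if x \<in> {0..} then f x else 0) has_integral z) (cbox a b) \<and> norm (z - L) < e"
      using B0[OF bB0] by (auto simp: dist_norm)
  qed
qed

lemma improper_to_lim:
  fixes f :: "real \<Rightarrow> real"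
  assumes h: "(f has_integral L) {0..}"
  shows "((\<lambda>b. integral {0..b} f) \<longlongrightarrow> L) at_top"
proof (rule tendstoI)
  fix e :: real assume e: "e > 0"
  obtain B where B: "B > 0" and BB: "\<forall>a b. ball 0 B \<subseteq> cbox a b \<longrightarrow>
      (\<exists>z. ((\<lambda>x. if x \<in> {0..} then f(x) else 0) has_integral z) (cbox a b) \<and> norm(z - L) < e)"
    using has_integral_altD[OF h Ici_not_cbox e] by blast
  show "\<forall>\<^sub>F b in at_top. dist (integral {0..b} f) L < e"
    unfolding eventually_at_top_linorder
  proof (intro exI[of _ B] allI impI)
    fix b assume bB: "b \<ge> B"
    have "ball 0 B \<subseteq> cbox (-b) b"
    proof
      fix x :: real assume "x \<in> ball 0 B"
      then have "\<bar>x\<bar> < B" by (simp add: dist_real_def)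
      then show "x \<in> cbox (-b) b" using bB by (simp add: cbox_interval abs_less_iff)
    qed
    from BB[rule_format, OF this] obtain z where z: "((\<lambda>x. if x \<in> {0..} then f(x) else 0) has_integral z) {-b..b}" and zL: "norm (z - L) < e"
      by auto
    have "f integrable_on {0..b}"
      using has_integral_integrable[OF h] by (rule integrable_on_subinterval) auto
    then have "(f has_integral integral {0..b} f) {0..b}" by blast
    then have "((\<lambda>x. if x \<in> {0..b} then f x else 0) has_integral integral {0..b} f) {-b..b}"
      using B bB by (subst has_integral_restrict) auto
    then have "((\<lambda>x. if x \<in> {0..} then f x else 0) has_integral integral {0..b} f) {-b..b}"
      by (rule has_integral_eq[rotated]) auto
    then have "z = integral {0..b} f" using z by (rule has_integral_unique[rotated])
    then show "dist (integral {0..b} f) L < e" using zL by (simp add: dist_norm)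
  qed
qed

lemma ftc_real:
  fixes F f :: "real \<Rightarrow> real"
  assumes "a \<le> b" "\<And>x. x \<in> {a..b} \<Longrightarrow> (F has_real_derivative f x) (at x)"
  shows "(f has_integral (F b - F a)) {a..b}"
  using assms(1)
  by (rule fundamental_theorem_of_calculus)
     (use assms(2) in \<open>auto simp: has_real_derivative_iff_has_vector_derivative[symmetric] intro: has_field_derivative_at_within\<close>)

lemma sin_ge_half:
  fixes w :: real
  assumes "0 \<le> w" "w \<le> pi/2"
  shows "w/2 \<le> sin w"
proof (cases "w \<le> pi/3")
  case True
  have "(\<lambda>x. sin x - x/2) 0 \<le> (\<lambda>x. sin x - x/2) w"
  proof (rule DERIV_nonneg_imp_nondecreasing[OF assms(1)])
    fix x assume x: "0 \<le> x" "x \<le> w"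
    have "cos (pi/3) \<le> cos x"
      using x True by (intro cos_monotone_0_pi_le) auto
    then have "cos x - 1/2 \<ge> 0" by (simp add: cos_60)
    moreover have "DERIV (\<lambda>x. sin x - x/2) x :> cos x - 1/2"
      by (auto intro!: derivative_eq_intros)
    ultimately show "\<exists>y. DERIV (\<lambda>x. sin x - x/2) x :> y \<and> y \<ge> 0" by blast
  qed
  then show ?thesis by simp
next
  case False
  have "sin (pi/3) \<le> sin w"
    using False assms by (intro sin_monotone_2pi_le) auto
  moreover have "sqrt 3 \<ge> 1.7"
    by (rule real_le_rsqrt) (simp add: power2_eq_square)
  moreover have "pi \<le> 3.2" using pi_approx by simp
  ultimately show ?thesis using assms unfolding sin_60 by linarith
qed

lemma cos_ge_lin:
  fixes v :: real
  assumes "0 \<le> v" "v \<le> pi/2"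
  shows "(pi/2 - v)/2 \<le> cos v"
  using sin_ge_half[of "pi/2 - v"] assms by (simp add: sin_cos_eq)

lemma exp_lin_integral_bound:
  fixes M :: real
  assumes "M > 0"
  shows "((\<lambda>v. exp (- M * (pi/2 - v) / 2)) has_integral (2/M - 2/M * exp (- M * pi / 4))) {0..pi/2}"
proof -
  have "((\<lambda>v. exp (- M * (pi/2 - v) / 2)) has_integral
      ((\<lambda>v. 2/M * exp (- M * (pi/2 - v) / 2)) (pi/2) - (\<lambda>v. 2/M * exp (- M * (pi/2 - v) / 2)) 0)) {0..pi/2}"
    using assms by (intro ftc_real) (auto intro!: derivative_eq_intros simp: field_simps)
  then show ?thesis by (simp add: field_simps)
qed

lemma cosh_ge_self: "(u::real) \<le> cosh u"
proof (cases "1 + u/2 \<ge> 0")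
  case True
  have e: "exp (u/2) \<ge> 1 + u/2" by (rule exp_ge_add_one_self)
  have eu: "exp u = exp (u/2)^2" by (simp add: exp_double[symmetric])
  have "(1 + u/2)^2 \<le> exp (u/2)^2"
    using e True by (intro power_mono) auto
  moreover have "(1 + u/2)^2 - 2*u = (1 - u/2)^2" by (simp add: power2_eq_square algebra_simps)
  moreover have "(1 - u/2)^2 \<ge> 0" by simp
  ultimately have "2*u \<le> exp u" using eu by linarith
  moreover have "exp (-u) > 0" by simp
  moreover have "cosh u = exp u/2 + exp (-u)/2" by (simp add: cosh_field_def add_divide_distrib)
  ultimately show ?thesis by linarith
next
  case False
  then show ?thesis using cosh_real_pos[of u] by linarith
qed

lemma integrable_Ici_bound:
  fixes f g :: "real \<Rightarrow> real"
  assumes "continuous_on {0..} f" "g integrable_on {0..}" "\<And>x. x \<ge> 0 \<Longrightarrow> \<bar>f x\<bar> \<le> g x"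
  shows "f integrable_on {0..}"
  by (rule measurable_bounded_by_integrable_imp_integrable[OF continuous_imp_measurable_on_sets_lebesgue[OF assms(1)]])
     (use assms in auto)

lemma K0_integrable:
  fixes t :: real
  assumes "t > 0"
  shows "(\<lambda>u. exp (- t * cosh u)) integrable_on {0..}"
proof (rule integrable_Ici_bound[where g="\<lambda>x::real. exp (- t * x)"])
  show "continuous_on {0..} (\<lambda>u. exp (- t * cosh u))" by (intro continuous_intros)
  show "(\<lambda>x. exp (- t * x)) integrable_on {0..}"
    using integrable_on_exp_minus_to_infinity[OF assms] by simp
  fix x :: real assume "x \<ge> 0"
  show "\<bar>exp (- t * cosh x)\<bar> \<le> exp (- t * x)"
    using cosh_ge_self[of x] assms by (simp add: mult_left_mono)
qed

lemma has_contour_integral_linepath_same_Im: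
  fixes f :: "complex \<Rightarrow> complex"
  assumes "a < b"
  shows "(f has_contour_integral I) (linepath (Complex a c) (Complex b c)) \<longleftrightarrow>
         ((\<lambda>x. f (Complex x c)) has_integral I) {a..b}"
proof -
  have eq: "linepath (Complex a c) (Complex b c) x = linepath (of_real a) (of_real b) x + \<i> * of_real c" for x
    by (simp add: linepath_def complex_eq_iff scaleR_conv_of_real algebra_simps)
  have d: "Complex b c - Complex a c = of_real b - of_real a"
    by (simp add: complex_eq_iff)
  have "(f has_contour_integral I) (linepath (Complex a c) (Complex b c)) \<longleftrightarrow>
        ((\<lambda>x. f (linepath (Complex a c) (Complex b c) x) * (Complex b c - Complex a c)) has_integral I) {0..1}"
    by (rule has_contour_integral_linepath)
  also have "\<dots> \<longleftrightarrow> ((\<lambda>x. (\<lambda>z. f (z + \<i> * of_real c)) (linepath (of_real a) (of_real b) x) * (of_real b - of_real a)) has_integral I) {0..1}"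
    by (simp only: eq d)
  also have "\<dots> \<longleftrightarrow> ((\<lambda>z. f (z + \<i> * of_real c)) has_contour_integral I) (linepath (of_real a) (of_real b))"
    by (rule has_contour_integral_linepath[symmetric])
  also have "\<dots> \<longleftrightarrow> ((\<lambda>x. f (of_real x + \<i> * of_real c)) has_integral I) {Re (of_real a)..Re (of_real b)}"
    using assms by (intro has_contour_integral_linepath_Reals_iff) auto
  also have "(\<lambda>x. f (of_real x + \<i> * of_real c)) = (\<lambda>x. f (Complex x c))"
  proof -
    have "\<And>x. complex_of_real x + \<i> * complex_of_real c = Complex x c" by (simp add: complex_eq_iff)
    then show ?thesis by simp
  qed
  finally show ?thesis by simp
qed

definition fz :: "real \<Rightarrow> complex \<Rightarrow> complex" where
  "fz t z = exp (- of_real t * ((exp z + exp (-z)) / 2))"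

lemma fz_holo: "fz t holomorphic_on UNIV"
  unfolding fz_def by (intro holomorphic_intros) auto

lemma fz_cont: "continuous_on S (fz t)"
  using fz_holo holomorphic_on_imp_continuous_on continuous_on_subset by blast

lemma fz_real: "fz t (complex_of_real x) = complex_of_real (exp (- t * cosh x))"
proof -
  have e1: "exp (complex_of_real x) = of_real (exp x)" by (rule exp_of_real)
  have e2: "exp (- complex_of_real x) = of_real (exp (-x))" by (metis exp_of_real of_real_minus)
  have c: "(exp (complex_of_real x) + exp (- complex_of_real x)) / 2 = of_real (cosh x)"
    unfolding e1 e2 cosh_field_def[of x] by simp
  show ?thesis unfolding fz_def c by (metis exp_of_real of_real_minus of_real_mult)
qed

lemma fz_top: "fz t (Complex x (pi/2)) = complex_of_real (cos (t * sinh x)) - \<i> * complex_of_real (sin (t * sinh x))"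
proof -
  have e1: "exp (Complex x (pi/2)) = \<i> * of_real (exp x)"
    by (simp add: exp_eq_polar)
  have e2: "exp (- Complex x (pi/2)) = - \<i> * of_real (exp (-x))"
  proof -
    have "- Complex x (pi/2) = Complex (-x) (-(pi/2))" by (simp add: complex_eq_iff)
    then show ?thesis by (simp add: exp_eq_polar)
  qed
  have c: "(exp (Complex x (pi/2)) + exp (- Complex x (pi/2))) / 2 = \<i> * of_real (sinh x)"
    unfolding e1 e2 by (simp add: sinh_field_def algebra_simps diff_divide_distrib)
  have "- of_real t * (\<i> * of_real (sinh x)) = \<i> * complex_of_real (- t * sinh x)" by simp
  then have "fz t (Complex x (pi/2)) = cis (- t * sinh x)"
    unfolding fz_def c cis_conv_exp by (simp add: mult.left_commute)
  then show ?thesis by (simp add: complex_eq_iff)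
qed

lemma fz_left: "fz t (Complex 0 v) = complex_of_real (exp (- t * cos v))"
proof -
  have "exp (Complex 0 v) = cis v" by (simp add: exp_eq_polar)
  moreover have "exp (- Complex 0 v) = cis (-v)"
  proof -
    have "- Complex 0 v = Complex 0 (-v)" by (simp add: complex_eq_iff)
    then show ?thesis by (simp add: exp_eq_polar)
  qed
  moreover have "cis v + cis (-v) = 2 * of_real (cos v)"
    by (simp add: complex_eq_iff)
  ultimately have c: "(exp (Complex 0 v) + exp (- Complex 0 v)) / 2 = of_real (cos v)"
    by simp
  show ?thesis unfolding fz_def c by (metis exp_of_real of_real_minus of_real_mult)
qed

lemma norm_fz_right: "norm (fz t (Complex U v)) = exp (- t * cosh U * cos v)"
proof -
  have "Re (- of_real t * ((exp (Complex U v) + exp (- Complex U v)) / 2)) = - t * cosh U * cos v"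
  proof -
    have "- Complex U v = Complex (-U) (-v)" by (simp add: complex_eq_iff)
    then show ?thesis by (simp add: Re_exp cosh_field_def field_simps)
  qed
  then show ?thesis unfolding fz_def by simp
qed

lemma cont_Complex1: "continuous_on S (\<lambda>x. f (Complex x c))" if "continuous_on UNIV f" for f :: "complex \<Rightarrow> complex"
proof -
  have e: "\<And>x. Complex x c = of_real x + \<i> * of_real c" by (simp add: complex_eq_iff)
  have "continuous_on S (\<lambda>x. f (of_real x + \<i> * of_real c))"
    by (intro continuous_on_compose2[OF that] continuous_intros) auto
  then show ?thesis unfolding e .
qed

lemma cont_Complex2: "continuous_on S (\<lambda>x. f (Complex c x))" if "continuous_on UNIV f" for f :: "complex \<Rightarrow> complex"
proof -
  have e: "\<And>x. Complex c x = of_real c + \<i> * of_real x" by (simp add: complex_eq_iff)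
  have "continuous_on S (\<lambda>x. f (of_real c + \<i> * of_real x))"
    by (intro continuous_on_compose2[OF that] continuous_intros) auto
  then show ?thesis unfolding e .
qed

lemma contour_K0:
  fixes t U :: real
  assumes t: "t > 0" and U: "U > 0"
  shows "\<bar>integral {0..U} (\<lambda>x. cos (t * sinh x)) - integral {0..U} (\<lambda>x. exp (- t * cosh x))\<bar> \<le> 2 / (t * cosh U)"
proof -
  define R1 where "R1 = integral {0..U} (\<lambda>x. exp (- t * cosh x))"
  define C where "C = integral {0..U} (\<lambda>x. cos (t * sinh x))"
  define S where "S = integral {0..U} (\<lambda>x. sin (t * sinh x))"
  define W where "W = integral {0..pi/2} (\<lambda>v. fz t (Complex U v))"
  define Kr where "Kr = integral {0..pi/2} (\<lambda>v. exp (- t * cos v))"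
  have fc: "continuous_on UNIV (fz t)" by (rule fz_cont)
  have iR1: "((\<lambda>x. exp (- t * cosh x)) has_integral R1) {0..U}"
    unfolding R1_def by (intro integrable_integral integrable_continuous_interval continuous_intros)
  have iC: "((\<lambda>x. cos (t * sinh x)) has_integral C) {0..U}"
    unfolding C_def by (intro integrable_integral integrable_continuous_interval continuous_intros)
  have iS: "((\<lambda>x. sin (t * sinh x)) has_integral S) {0..U}"
    unfolding S_def by (intro integrable_integral integrable_continuous_interval continuous_intros)
  have iW: "((\<lambda>v. fz t (Complex U v)) has_integral W) {0..pi/2}"
    unfolding W_def by (intro integrable_integral integrable_continuous_interval cont_Complex2 fc)
  have iK: "((\<lambda>v. exp (- t * cos v)) has_integral Kr) {0..pi/2}"
    unfolding Kr_def by (intro integrable_integral integrable_continuous_interval continuous_intros)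
  let ?g1 = "linepath 0 (complex_of_real U)"
  let ?g2 = "linepath (complex_of_real U) (Complex U (pi/2))"
  let ?g3 = "linepath (Complex U (pi/2)) (Complex 0 (pi/2))"
  let ?g4 = "linepath (Complex 0 (pi/2)) 0"
  have h1: "(fz t has_contour_integral of_real R1) ?g1"
  proof -
    have "((\<lambda>x. fz t (of_real x)) has_integral of_real R1) {Re 0..Re (complex_of_real U)}"
      using has_integral_of_real[OF iR1, where 'b=complex] by (simp add: fz_real)
    then show ?thesis using U by (subst has_contour_integral_linepath_Reals_iff) auto
  qed
  have h2: "(fz t has_contour_integral (\<i> * W)) ?g2"
    by (subst has_contour_integral_linepath_same_Re_iff[where c=U and a=0 and b="pi/2"]) (use iW in auto)
  have h3: "(fz t has_contour_integral (- (of_real C - \<i> * of_real S))) ?g3"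
  proof -
    have "((\<lambda>x. fz t (Complex x (pi/2))) has_integral (of_real C - \<i> * of_real S)) {0..U}"
      unfolding fz_top
      by (intro has_integral_diff has_integral_mult_right has_integral_of_real iC iS)
    then have "(fz t has_contour_integral (of_real C - \<i> * of_real S)) (linepath (Complex 0 (pi/2)) (Complex U (pi/2)))"
      using U by (subst has_contour_integral_linepath_same_Im) auto
    from has_contour_integral_reversepath[OF _ this] show ?thesis by simp
  qed
  have h4: "(fz t has_contour_integral (- (\<i> * of_real Kr))) ?g4"
  proof -
    have "((\<lambda>v. fz t (Complex 0 v)) has_integral of_real Kr) {0..pi/2}"
      unfolding fz_left by (intro has_integral_of_real iK)
    then have "(fz t has_contour_integral (\<i> * of_real Kr)) (linepath 0 (Complex 0 (pi/2)))"
      by (subst has_contour_integral_linepath_same_Re_iff[where c=0 and a=0 and b="pi/2"]) auto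
    from has_contour_integral_reversepath[OF _ this] show ?thesis by simp
  qed
  have hall: "(fz t has_contour_integral (of_real R1 + (\<i> * W + (- (of_real C - \<i> * of_real S) + - (\<i> * of_real Kr)))))
      (?g1 +++ ?g2 +++ ?g3 +++ ?g4)"
    by (intro has_contour_integral_join h1 h2 h3 h4 valid_path_join) auto
  have h0: "(fz t has_contour_integral 0) (?g1 +++ ?g2 +++ ?g3 +++ ?g4)"
    by (rule Cauchy_theorem_convex_simple[OF fz_holo]) auto
  have eq: "of_real R1 + (\<i> * W + (- (of_real C - \<i> * of_real S) + - (\<i> * of_real Kr))) = 0"
    using has_contour_integral_unique[OF hall h0] .
  then have "Re (of_real R1 + (\<i> * W + (- (of_real C - \<i> * of_real S) + - (\<i> * of_real Kr)))) = 0" by simp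
  then have CR: "C - R1 = - Im W" by simp
  define M where "M = t * cosh U"
  have M: "M > 0" unfolding M_def using t by (simp add: cosh_real_pos)
  have "norm W \<le> integral {0..pi/2} (\<lambda>v. exp (- M * (pi/2 - v) / 2))"
    unfolding W_def
  proof (rule integral_norm_bound_integral)
    show "(\<lambda>v. fz t (Complex U v)) integrable_on {0..pi/2}" using iW by blast
    show "(\<lambda>v. exp (- M * (pi/2 - v) / 2)) integrable_on {0..pi/2}"
      using exp_lin_integral_bound[OF M] by blast
    fix v assume v: "v \<in> {0..pi/2}"
    have "M * ((pi/2 - v)/2) \<le> M * cos v" using cos_ge_lin[of v] v M by (intro mult_left_mono) auto
    then show "norm (fz t (Complex U v)) \<le> exp (- M * (pi/2 - v) / 2)"
      unfolding norm_fz_right M_def by simp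
  qed
  also have "\<dots> = 2/M - 2/M * exp (- M * pi / 4)"
    using exp_lin_integral_bound[OF M] by (rule integral_unique)
  also have "\<dots> \<le> 2/M" using M by simp
  finally have "norm W \<le> 2/M" .
  moreover have "\<bar>Im W\<bar> \<le> norm W" by (rule abs_Im_le_cmod)
  ultimately show ?thesis using CR unfolding C_def R1_def M_def by simp
qed

lemma cos_sinh_lim:
  fixes t :: real assumes t: "t > 0"
  shows "((\<lambda>U. integral {0..U} (\<lambda>x. cos (t * sinh x))) \<longlongrightarrow> besselK0 t) at_top"
proof -
  have R: "((\<lambda>U. integral {0..U} (\<lambda>x. exp (- t * cosh x))) \<longlongrightarrow> besselK0 t) at_top"
    unfolding besselK0_def by (intro improper_to_lim integrable_integral K0_integrable t)
  have g0: "((\<lambda>U::real. 2 / (t * U)) \<longlongrightarrow> 0) at_top"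
  proof -
    have "((\<lambda>U::real. (2/t) * inverse U) \<longlongrightarrow> (2/t) * 0) at_top"
      by (intro tendsto_mult tendsto_const tendsto_inverse_0_at_top filterlim_ident)
    moreover have "(\<lambda>U::real. (2/t) * inverse U) = (\<lambda>U. 2 / (t * U))"
      by (simp add: fun_eq_iff field_simps)
    ultimately show ?thesis by simp
  qed
  have E: "((\<lambda>U. integral {0..U} (\<lambda>x. cos (t * sinh x)) - integral {0..U} (\<lambda>x. exp (- t * cosh x))) \<longlongrightarrow> 0) at_top"
  proof (rule Lim_null_comparison[OF _ g0])
    show "\<forall>\<^sub>F U in at_top. norm (integral {0..U} (\<lambda>x. cos (t * sinh x)) - integral {0..U} (\<lambda>x. exp (- t * cosh x))) \<le> 2 / (t * U)"
      unfolding eventually_at_top_linorder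
    proof (intro exI[of _ 1] allI impI)
      fix U :: real assume U: "U \<ge> 1"
      have "2 / (t * cosh U) \<le> 2 / (t * U)"
        using U t cosh_ge_self[of U] by (intro divide_left_mono mult_left_mono mult_pos_pos) auto
      then show "norm (integral {0..U} (\<lambda>x. cos (t * sinh x)) - integral {0..U} (\<lambda>x. exp (- t * cosh x))) \<le> 2 / (t * U)"
        using contour_K0[OF t, of U] U by simp
    qed
  qed
  have "((\<lambda>U. integral {0..U} (\<lambda>x. exp (- t * cosh x)) + (integral {0..U} (\<lambda>x. cos (t * sinh x)) - integral {0..U} (\<lambda>x. exp (- t * cosh x)))) \<longlongrightarrow> besselK0 t + 0) at_top"
    by (intro tendsto_add R E)
  then show ?thesis by simp
qed

lemma subst_sinh:
  fixes t B :: real assumes B: "B \<ge> 0"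
  shows "integral {0..B} (\<lambda>y. cos (t * y) * (1 + y^2) powr (-1/2)) = integral {0..arsinh B} (\<lambda>x. cos (t * sinh x))"
proof -
  let ?f = "\<lambda>y::real. cos (t * y) * (1 + y^2) powr (-1/2)"
  have cf: "continuous_on {0..B} ?f"
  proof -
    have pos: "\<And>y::real. 1 + y^2 \<noteq> 0" by (metis add_pos_nonneg zero_le_power2 zero_less_one less_irrefl)
    show ?thesis by (intro continuous_intros) (use pos in auto)
  qed
  have "((\<lambda>x. cosh x *\<^sub>R ?f (sinh x)) has_integral (integral {sinh 0..sinh (arsinh B)} ?f)) {0..arsinh B}"
  proof (rule has_integral_substitution_strong[of "{}" 0 "arsinh B" sinh 0 B ?f cosh])
    show "0 \<le> arsinh B" using arsinh_real_pos_iff[of B] B by (cases "B = 0") (auto simp del: arsinh_real_pos_iff)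
    show "sinh 0 \<le> sinh (arsinh B)" using B by simp
    show "sinh ` {0..arsinh B} \<subseteq> {0..B}"
    proof
      fix y assume "y \<in> sinh ` {0..arsinh B}"
      then obtain x where x: "x \<in> {0..arsinh B}" "y = sinh x" by auto
      then have "sinh x \<le> sinh (arsinh B)" "sinh 0 \<le> sinh x" by (simp_all del: sinh_arsinh_real)
      then show "y \<in> {0..B}" using x by simp
    qed
    show "continuous_on {0..arsinh B} sinh" by (intro continuous_intros)
    fix x assume "x \<in> {0..arsinh B} - {}"
    show "(sinh has_real_derivative cosh x) (at x within {0..arsinh B})"
      by (intro derivative_eq_intros) auto
  qed (use cf in auto)
  moreover have eq: "cosh x *\<^sub>R ?f (sinh x) = cos (t * sinh x)" for x
  proof -
    have c: "cosh x > 0" by (rule cosh_real_pos)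
    have p: "cosh x powr 2 = cosh x ^ 2" using powr_realpow[OF c, of 2] by simp
    have e1: "1 + sinh x ^ 2 = cosh x powr 2" using cosh_square_eq[of x] p by simp
    have "(cosh x powr 2) powr (-1/2) = cosh x powr (2 * (-1/2))" by (rule powr_powr)
    then have "(1 + sinh x ^ 2) powr (-1/2) = cosh x powr (-1)" unfolding e1 by simp
    then show ?thesis using c by (simp add: powr_neg_one)
  qed
  ultimately have "((\<lambda>x. cos (t * sinh x)) has_integral integral {sinh 0..sinh (arsinh B)} ?f) {0..arsinh B}" by (simp only: eq)
  then have "((\<lambda>x. cos (t * sinh x)) has_integral integral {0..B} ?f) {0..arsinh B}" by simp
  then show ?thesis by (simp add: integral_unique)
qed

lemma K0_cos_lim:
  fixes t :: real assumes t: "t > 0"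
  shows "((\<lambda>B. integral {0..B} (\<lambda>y. cos (t * y) * (1 + y^2) powr (-1/2))) \<longlongrightarrow> besselK0 t) at_top"
proof -
  have "((\<lambda>B. integral {0..arsinh B} (\<lambda>x. cos (t * sinh x))) \<longlongrightarrow> besselK0 t) at_top"
    using filterlim_compose[OF cos_sinh_lim[OF t] arsinh_real_at_top] by (simp add: o_def)
  moreover have "\<forall>\<^sub>F B in at_top. integral {0..arsinh B} (\<lambda>x. cos (t * sinh x)) = integral {0..B} (\<lambda>y. cos (t * y) * (1 + y^2) powr (-1/2))"
    unfolding eventually_at_top_linorder by (intro exI[of _ 0] allI impI, rule subst_sinh[symmetric])
  ultimately show ?thesis by (rule Lim_transform_eventually)
qed

definition alpha :: "nat \<Rightarrow> real" where
  "alpha i = (if even i then (-1)^(i div 2) / (4^(i div 2) * (fact (i div 2))^2) else 0)"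

definition qq :: "nat \<Rightarrow> real \<Rightarrow> real" where
  "qq k y = (\<Sum>i\<le>k. alpha i * y^(k-i) / fact (k-i))"

lemma alpha_0 [simp]: "alpha 0 = 1" by (simp add: alpha_def)
lemma alpha_1 [simp]: "alpha 1 = 0" by (simp add: alpha_def)
lemma alpha_odd: "odd i \<Longrightarrow> alpha i = 0" by (simp add: alpha_def)

lemma alpha_Suc0 [simp]: "alpha (Suc 0) = 0" by (simp add: alpha_def)

lemma alpha_rec: "(real k + 2)^2 * alpha (k+2) = - alpha k"
proof (cases "even k")
  case True
  then obtain m where k: "k = 2*m" by (auto elim: evenE)
  have e: "(k+2) div 2 = Suc m" "k div 2 = m" "even (k+2)" using k by auto
  have a2: "alpha (k+2) = (-1)^(Suc m) / (4 * 4^m * ((real m + 1) * fact m)^2)"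
    unfolding alpha_def using e by (simp add: fact_Suc)
  have a0: "alpha k = (-1)^m / (4^m * (fact m)^2)"
    unfolding alpha_def using e True by simp
  have r: "real k + 2 = 2 * (real m + 1)" using k by simp
  have nz: "fact m \<noteq> (0::real)" "(4::real)^m \<noteq> 0" "real m + 1 \<noteq> 0" by auto
  have X: "4 * 4^m * ((real m + 1) * fact m)^2 = (2 * (real m + 1))^2 * (4^m * (fact m)^2)"
    by (simp add: power_mult_distrib mult_ac power2_eq_square algebra_simps)
  have nz2: "(2 * (real m + 1))^2 \<noteq> 0" "4^m * (fact m)^2 \<noteq> (0::real)" using nz by auto
  show ?thesis unfolding a2 a0 r X using nz2 by simp
next
  case False
  then show ?thesis by (simp add: alpha_def)
qed

lemma alpha_bound: "\<bar>alpha i\<bar> \<le> 1 / fact i"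
proof (cases "even i")
  case True
  then obtain m where i: "i = 2*m" by (auto elim: evenE)
  have "fact m * fact (2*m - m) * (2*m choose m) = (fact (2*m) :: nat)"
    by (rule binomial_fact_lemma) simp
  then have f: "fact (2*m) = fact m * fact m * real (2*m choose m)"
    by (metis of_nat_fact of_nat_mult diff_add_inverse2 mult_2)
  have "(2*m choose m) \<le> 2^(2*m)" by (rule binomial_le_pow2)
  also have "(2::nat)^(2*m) = 4^m" by (simp add: power_mult)
  finally have "real (2*m choose m) \<le> 4^m"
    by (metis of_nat_le_iff of_nat_numeral of_nat_power)
  then have le: "fact (2*m) \<le> (4::real)^m * (fact m)^2"
    unfolding f by (simp add: power2_eq_square mult_ac mult_left_mono)
  have a: "\<bar>alpha i\<bar> = 1 / (4^m * (fact m)^2)"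
    using i by (simp add: alpha_def abs_mult power_abs abs_divide)
  have "1 / (4^m * (fact m)^2) \<le> 1 / (fact i :: real)"
    unfolding i by (rule frac_le) (use le in auto)
  then show ?thesis unfolding a .
next
  case False
  then show ?thesis by (simp add: alpha_def)
qed

lemma qq_0 [simp]: "qq 0 y = 1" by (simp add: qq_def)

lemma qq_at0: "qq k 0 = alpha k"
proof (cases k)
  case 0 then show ?thesis by simp
next
  case (Suc m)
  have "(\<Sum>i\<le>m. alpha i * 0^(Suc m - i) / fact (Suc m - i)) = 0"
    by (intro sum.neutral) (auto simp: Suc_diff_le)
  then show ?thesis unfolding qq_def Suc by simp
qed

lemma qq_Suc_eq: "qq (Suc m) y = (\<Sum>i\<le>m. alpha i * y^Suc (m-i) / fact (Suc (m-i))) + alpha (Suc m)"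
proof -
  have "(\<Sum>i\<le>m. alpha i * y^(Suc m - i) / fact (Suc m - i)) = (\<Sum>i\<le>m. alpha i * y^Suc (m-i) / fact (Suc (m-i)))"
    by (intro sum.cong refl) (simp add: Suc_diff_le)
  then show ?thesis unfolding qq_def by simp
qed

lemma term_deriv: "((\<lambda>y. a * y^Suc n / fact (Suc n)) has_real_derivative a * y^n / fact n) (at y)"
proof -
  have e: "(\<lambda>y. a * y^Suc n / fact (Suc n)) = (\<lambda>y. (a / fact (Suc n)) * y^Suc n)" by (simp add: fun_eq_iff)
  have d: "((\<lambda>y. (a / fact (Suc n)) * y^Suc n) has_real_derivative (a / fact (Suc n)) * (real (Suc n) * y^(Suc n - Suc 0))) (at y)"
    by (intro DERIV_cmult DERIV_pow)
  have v: "(a / fact (Suc n)) * (real (Suc n) * y^(Suc n - Suc 0)) = a * y^n / fact n"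
    by (simp add: fact_Suc field_simps del: of_nat_Suc)
  show ?thesis unfolding e using d v by metis
qed

lemma qq_deriv: "(qq k has_real_derivative (if k = 0 then 0 else qq (k - 1) y)) (at y)"
proof (cases k)
  case 0
  have "qq 0 = (\<lambda>y. 1)" by (simp add: fun_eq_iff)
  then show ?thesis using 0 by simp
next
  case (Suc m)
  have eq: "qq (Suc m) = (\<lambda>y. (\<Sum>i\<le>m. alpha i * y^Suc (m-i) / fact (Suc (m-i))) + alpha (Suc m))"
    by (simp add: fun_eq_iff qq_Suc_eq)
  have "((\<lambda>y. (\<Sum>i\<le>m. alpha i * y^Suc (m-i) / fact (Suc (m-i))) + alpha (Suc m)) has_real_derivative
      (\<Sum>i\<le>m. alpha i * y^(m-i) / fact (m-i)) + 0) (at y)"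
    by (intro DERIV_add DERIV_sum DERIV_const term_deriv)
  then show ?thesis using Suc eq by (simp add: qq_def)
qed

lemma qq_deriv_Suc: "(qq (Suc k) has_real_derivative qq k y) (at y within s)"
  using qq_deriv[of "Suc k" y] by (simp add: has_field_derivative_at_within)

lemma qq_deriv_0: "(qq 0 has_real_derivative 0) (at y within s)"
  using qq_deriv[of 0 y] by (simp add: has_field_derivative_at_within)

lemma qq_1: "qq (Suc 0) y = y"
  by (simp add: qq_def)

lemma qq_rec2: "(real k + 2)^2 * qq (Suc (Suc k)) y = (2 * real k + 3) * y * qq (Suc k) y - (1 + y^2) * qq k y"
proof -
  define r where "r k y = (real k + 2)^2 * qq (Suc (Suc k)) y - (2 * real k + 3) * y * qq (Suc k) y + (1 + y^2) * qq k y" for k y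
  have "\<forall>y. r k y = 0"
  proof (induction k)
    case 0
    have a2: "alpha 2 = -1/4" by (simp add: alpha_def)
    have q2: "qq (Suc (Suc 0)) y = y^2/2 - 1/4" for y
      using a2 by (simp add: qq_def numeral_2_eq_2 power2_eq_square)
    show ?case unfolding r_def q2 qq_1 by (simp add: algebra_simps power2_eq_square)
  next
    case (Suc m)
    have d: "DERIV (r (Suc m)) x :> 0" for x
    proof -
      have "DERIV (r (Suc m)) x :> (real (Suc m) + 2)^2 * qq (Suc (Suc m)) x - (2 * real (Suc m) + 3) * (1 * qq (Suc (Suc m)) x + x * qq (Suc m) x) + ((0 + 2 * x^1 * 1) * qq (Suc m) x + (1 + x^2) * qq m x)"
        unfolding r_def
        using qq_deriv_Suc[of "Suc (Suc m)" x UNIV] qq_deriv_Suc[of "Suc m" x UNIV] qq_deriv_Suc[of m x UNIV]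
        by (auto intro!: derivative_eq_intros simp: algebra_simps)
      moreover have "r m x = 0" using Suc.IH by simp
      moreover have "(real (Suc m) + 2)^2 * qq (Suc (Suc m)) x - (2 * real (Suc m) + 3) * (1 * qq (Suc (Suc m)) x + x * qq (Suc m) x) + ((0 + 2 * x^1 * 1) * qq (Suc m) x + (1 + x^2) * qq m x) = r m x"
        unfolding r_def by (simp add: algebra_simps power2_eq_square)
      ultimately show ?thesis by simp
    qed
    have "r (Suc m) y = r (Suc m) 0" for y using DERIV_isconst_all[of "r (Suc m)"] d by blast
    moreover have "r (Suc m) 0 = 0" unfolding r_def qq_at0 using alpha_rec[of "Suc m"] by (simp add: numeral_2_eq_2)
    ultimately show ?case by simp
  qed
  then show ?thesis unfolding r_def by (simp add: algebra_simps)
qed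

definition PP :: "nat \<Rightarrow> real \<Rightarrow> real" where
  "PP k y = qq k y * (1 + y^2) powr (- real k - 1/2)"

lemma A_pos: "(0::real) < 1 + y^2"
  by (metis add_pos_nonneg zero_le_power2 zero_less_one)

lemma PP_0: "PP 0 y = (1 + y^2) powr (-1/2)"
  by (simp add: PP_def)

lemma qq_rec_unified:
  "(1 + y^2) * (if k = 0 then 0 else qq (k - 1) y) - (2 * real k + 1) * y * qq k y = - ((real k + 1)^2 * qq (Suc k) y)"
proof (cases k)
  case 0 then show ?thesis by (simp add: qq_1)
next
  case (Suc m)
  have "(real m + 2)^2 * qq (Suc (Suc m)) y = (2 * real m + 3) * y * qq (Suc m) y - (1 + y^2) * qq m y"
    by (rule qq_rec2)
  moreover have "real k + 1 = real m + 2" "2 * real k + 1 = 2 * real m + 3" using Suc by auto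
  ultimately show ?thesis using Suc by (simp add: algebra_simps)
qed

lemma PP_deriv: "(PP k has_real_derivative (- ((real k + 1)^2 * PP (Suc k) y))) (at y)"
proof -
  define A where "A = 1 + y^2"
  define e where "e = - real k - 1/2"
  have A: "A > 0" unfolding A_def by (rule A_pos)
  have dA: "((\<lambda>y. (1 + y^2) powr e) has_real_derivative e * A powr (e - of_nat 1) * (2 * y)) (at y)"
    unfolding A_def by (rule DERIV_fun_powr) (auto intro!: derivative_eq_intros A_pos)
  have d: "(PP k has_real_derivative (if k = 0 then 0 else qq (k - 1) y) * A powr e + (e * A powr (e - of_nat 1) * (2 * y)) * qq k y) (at y)"
    unfolding PP_def e_def[symmetric] A_def by (intro DERIV_mult qq_deriv dA[unfolded A_def])
  have p1: "A powr (e - of_nat 1) = A powr e / A" using A by (simp add: powr_diff)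
  have "(if k = 0 then 0 else qq (k - 1) y) * A powr e + (e * A powr (e - of_nat 1) * (2 * y)) * qq k y
      = (if k = 0 then 0 else qq (k - 1) y) * A powr e + (e * (A powr e / A) * (2 * y)) * qq k y"
    by (simp only: p1)
  also have "\<dots> = (A powr e / A) * (A * (if k = 0 then 0 else qq (k - 1) y) - (2 * real k + 1) * y * qq k y)"
    using A by (simp add: e_def field_simps)
  also have "\<dots> = (A powr e / A) * (- ((real k + 1)^2 * qq (Suc k) y))"
    unfolding A_def by (simp only: qq_rec_unified)
  also have "\<dots> = - ((real k + 1)^2 * PP (Suc k) y)"
  proof -
    have "- real (Suc k) - 1/2 = e - 1" unfolding e_def by simp
    then have "PP (Suc k) y = qq (Suc k) y * (A powr e / A)"
      unfolding PP_def A_def[symmetric] using A by (simp add: powr_diff)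
    then show ?thesis by simp
  qed
  finally show ?thesis using d by simp
qed

lemma PP_deriv_within: "(PP k has_real_derivative (- ((real k + 1)^2 * PP (Suc k) y))) (at y within s)"
  using PP_deriv has_field_derivative_at_within by blast

definition beta :: "nat \<Rightarrow> real" where
  "beta k = (\<Sum>i\<le>k. 1 / (fact i * fact (k - i)))"

lemma pow_powr_bound:
  fixes y :: real and n k :: nat
  assumes "n \<le> k"
  shows "\<bar>y\<bar>^n * (1 + y^2) powr (- real k - 1/2) \<le> (1 + y^2) powr (real n / 2 - real k - 1/2)"
proof -
  define A where "A = 1 + y^2"
  have A: "A > 0" unfolding A_def by (rule A_pos)
  have "\<bar>y\<bar> = sqrt (y^2)" by simp
  also have "\<dots> \<le> sqrt A" unfolding A_def by (rule real_sqrt_le_mono) simp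
  also have "\<dots> = A powr (1/2)" using A by (simp add: powr_half_sqrt)
  finally have "\<bar>y\<bar>^n \<le> (A powr (1/2))^n" by (intro power_mono) auto
  also have "\<dots> = A powr (real n / 2)" using A by (simp add: powr_power)
  finally have "\<bar>y\<bar>^n * A powr (- real k - 1/2) \<le> A powr (real n / 2) * A powr (- real k - 1/2)"
    by (intro mult_right_mono) auto
  also have "\<dots> = A powr (real n / 2 + (- real k - 1/2))" by (simp add: powr_add)
  also have "real n / 2 + (- real k - 1/2) = real n / 2 - real k - 1/2" by simp
  finally show ?thesis unfolding A_def .
qed

lemma PP_bound_gen:
  fixes y :: real
  assumes "\<And>n. n \<le> k \<Longrightarrow> real n / 2 - real k - 1/2 \<le> c"
  shows "\<bar>PP k y\<bar> \<le> beta k * (1 + y^2) powr c"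
proof -
  define A where "A = 1 + y^2"
  have A: "A \<ge> 1" unfolding A_def by simp
  have "\<bar>PP k y\<bar> = \<bar>qq k y\<bar> * A powr (- real k - 1/2)"
    unfolding PP_def A_def by (simp add: abs_mult)
  also have "\<bar>qq k y\<bar> \<le> (\<Sum>i\<le>k. \<bar>alpha i * y^(k-i) / fact (k-i)\<bar>)"
    unfolding qq_def by (rule sum_abs)
  also have "\<dots> * A powr (- real k - 1/2) = (\<Sum>i\<le>k. \<bar>alpha i\<bar> / fact (k-i) * (\<bar>y\<bar>^(k-i) * A powr (- real k - 1/2)))"
    unfolding sum_distrib_right by (intro sum.cong refl) (simp add: abs_mult abs_divide power_abs)
  also have "\<dots> \<le> (\<Sum>i\<le>k. 1 / (fact i * fact (k - i)) * A powr c)"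
  proof (intro sum_mono mult_mono)
    fix i assume i: "i \<in> {..k}"
    show "\<bar>alpha i\<bar> / fact (k-i) \<le> 1 / (fact i * fact (k - i))"
      using alpha_bound[of i] by (simp add: divide_right_mono field_simps)
    have "\<bar>y\<bar>^(k-i) * A powr (- real k - 1/2) \<le> A powr (real (k-i) / 2 - real k - 1/2)"
      unfolding A_def by (rule pow_powr_bound) simp
    also have "\<dots> \<le> A powr c" using A assms[of "k-i"] by (intro powr_mono) auto
    finally show "\<bar>y\<bar>^(k-i) * A powr (- real k - 1/2) \<le> A powr c" .
  qed auto
  also have "\<dots> = beta k * A powr c" unfolding beta_def by (simp add: sum_distrib_right)
  finally show ?thesis unfolding A_def by (simp add: mult_right_mono)
qed

lemma PP_bound_half: "\<bar>PP k y\<bar> \<le> beta k * (1 + y^2) powr (-1/2)"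
  by (rule PP_bound_gen) auto

lemma PP_bound_one: "k \<ge> 1 \<Longrightarrow> \<bar>PP k y\<bar> \<le> beta k / (1 + y^2)"
proof -
  assume k: "k \<ge> 1"
  have "\<bar>PP k y\<bar> \<le> beta k * (1 + y^2) powr (-1)"
    by (rule PP_bound_gen) (use k in auto)
  then show ?thesis using A_pos[of y] by (simp add: powr_neg_one)
qed

lemma beta_nonneg: "beta k \<ge> 0"
  unfolding beta_def by (intro sum_nonneg) auto

lemma beta_summable: "summable (\<lambda>k. c^k * beta k)" if "c \<ge> 0" for c :: real
proof -
  have s0: "summable (\<lambda>k. c^k / fact k)"
    using summable_exp[of c] by (simp add: divide_inverse mult.commute)
  have s: "summable (\<lambda>k. norm (c^k / fact k))"
    using s0 that by simp
  have "(\<lambda>k. \<Sum>i\<le>k. (c^i / fact i) * (c^(k-i) / fact (k-i))) sums ((\<Sum>k. c^k / fact k) * (\<Sum>k. c^k / fact k))"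
    by (rule Cauchy_product_sums[OF s s])
  moreover have "(\<Sum>i\<le>k. (c^i / fact i) * (c^(k-i) / fact (k-i))) = c^k * beta k" for k
    unfolding beta_def sum_distrib_left
    by (intro sum.cong refl) (auto simp: power_add[symmetric])
  ultimately show ?thesis by (auto simp: sums_iff)
qed

lemma PP_at0: "PP k 0 = alpha k"
  by (simp add: PP_def qq_at0)

lemma PP_cont: "continuous_on S (PP k)"
  by (rule DERIV_continuous_on[OF PP_deriv_within])

definition JJ :: "real \<Rightarrow> nat \<Rightarrow> real \<Rightarrow> real" where
  "JJ t k B = integral {0..B} (\<lambda>y. cos (t * y) * PP k y)"

definition FF :: "real \<Rightarrow> nat \<Rightarrow> real \<Rightarrow> real" where
  "FF t k y = - ((real k + 1)^2 * (cos (t * y) * PP (Suc k) y)) + t * (sin (t * y) * PP k y)"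

lemma cosPP_int: "(\<lambda>y. cos (t * y) * PP k y) integrable_on {a..b}"
  by (intro integrable_continuous_interval continuous_intros PP_cont)

lemma IBP:
  assumes B: "B \<ge> 0"
  shows "(real k + 1)^2 * (real k + 2)^2 * JJ t (Suc (Suc k)) B + t^2 * JJ t k B = FF t k B - FF t k 0"
proof -
  have "((\<lambda>y. cos (t * y) * ((real k + 1)^2 * (real k + 2)^2 * PP (Suc (Suc k)) y + t^2 * PP k y)) has_integral (FF t k B - FF t k 0)) {0..B}"
  proof (rule ftc_real[OF B])
    fix x assume "x \<in> {0..B}"
    show "(FF t k has_real_derivative cos (t * x) * ((real k + 1)^2 * (real k + 2)^2 * PP (Suc (Suc k)) x + t^2 * PP k x)) (at x)"
    proof -
      have dcos: "((\<lambda>y. cos (t * y)) has_real_derivative - sin (t * x) * t) (at x)"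
        by (auto intro!: derivative_eq_intros)
      have dsin: "((\<lambda>y. sin (t * y)) has_real_derivative cos (t * x) * t) (at x)"
        by (auto intro!: derivative_eq_intros)
      have d: "(FF t k has_real_derivative
          - ((real k + 1)^2 * ((- sin (t * x) * t) * PP (Suc k) x + (- ((real (Suc k) + 1)^2 * PP (Suc (Suc k)) x)) * cos (t * x)))
          + t * ((cos (t * x) * t) * PP k x + (- ((real k + 1)^2 * PP (Suc k) x)) * sin (t * x))) (at x)"
        unfolding FF_def
        by (rule DERIV_add[OF DERIV_minus[OF DERIV_cmult[OF DERIV_mult[OF dcos PP_deriv]]] DERIV_cmult[OF DERIV_mult[OF dsin PP_deriv]]])
      have e: "real (Suc k) + 1 = real k + 2" by simp
      have "- ((real k + 1)^2 * ((- sin (t * x) * t) * PP (Suc k) x + (- ((real (Suc k) + 1)^2 * PP (Suc (Suc k)) x)) * cos (t * x)))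
          + t * ((cos (t * x) * t) * PP k x + (- ((real k + 1)^2 * PP (Suc k) x)) * sin (t * x))
          = cos (t * x) * ((real k + 1)^2 * (real k + 2)^2 * PP (Suc (Suc k)) x + t^2 * PP k x)"
        unfolding e by (simp add: algebra_simps power2_eq_square)
      then show ?thesis using d by simp
    qed
  qed
  moreover have "((\<lambda>y. cos (t * y) * ((real k + 1)^2 * (real k + 2)^2 * PP (Suc (Suc k)) y + t^2 * PP k y)) has_integral
      ((real k + 1)^2 * (real k + 2)^2 * JJ t (Suc (Suc k)) B + t^2 * JJ t k B)) {0..B}"
  proof -
    have "((\<lambda>y. (real k + 1)^2 * (real k + 2)^2 * (cos (t * y) * PP (Suc (Suc k)) y) + t^2 * (cos (t * y) * PP k y)) has_integral
      ((real k + 1)^2 * (real k + 2)^2 * JJ t (Suc (Suc k)) B + t^2 * JJ t k B)) {0..B}"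
      unfolding JJ_def by (intro has_integral_add has_integral_mult_right integrable_integral cosPP_int)
    then show ?thesis by (simp add: algebra_simps)
  qed
  ultimately show ?thesis by (rule has_integral_unique[rotated])
qed

lemma FF_0: "even k \<Longrightarrow> FF t k 0 = 0"
  by (simp add: FF_def PP_at0 alpha_odd)

lemma powr_half_lim: "((\<lambda>B::real. (1 + B^2) powr (-1/2)) \<longlongrightarrow> 0) at_top"
proof (rule Lim_null_comparison)
  show "((\<lambda>B::real. inverse B) \<longlongrightarrow> 0) at_top"
    by (intro tendsto_inverse_0_at_top filterlim_ident)
  show "\<forall>\<^sub>F B in at_top. norm ((1 + B^2) powr (-1/2)) \<le> inverse (B::real)"
    unfolding eventually_at_top_linorder
  proof (intro exI[of _ 1] allI impI)
    fix B :: real assume B: "B \<ge> 1"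
    have m: "(-1/2::real) = - (1/2)" by simp
    have e: "(1 + B^2) powr (-1/2) = 1 / sqrt (1 + B^2)"
      unfolding m powr_minus_divide using A_pos[of B] by (simp add: powr_half_sqrt)
    have "B = sqrt (B^2)" using B by simp
    also have "\<dots> \<le> sqrt (1 + B^2)" by (rule real_sqrt_le_mono) simp
    finally have "B \<le> sqrt (1 + B^2)" .
    moreover have "0 < B" using B by simp
    moreover have "0 < sqrt (1 + B^2)" using A_pos[of B] by simp
    ultimately have "1 / sqrt (1 + B^2) \<le> 1 / B" by (intro divide_left_mono) (auto intro: mult_pos_pos)
    then show "norm ((1 + B^2) powr (-1/2)) \<le> inverse B" unfolding e by (simp add: divide_inverse)
  qed
qed

lemma FF_lim: "((\<lambda>B. FF t k B) \<longlongrightarrow> 0) at_top"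
proof (rule Lim_null_comparison)
  define K where "K = (real k + 1)^2 * beta (Suc k) + \<bar>t\<bar> * beta k"
  show "((\<lambda>B. K * (1 + B^2) powr (-1/2)) \<longlongrightarrow> 0) at_top"
    using tendsto_mult_left[OF powr_half_lim, of K] by simp
  show "\<forall>\<^sub>F B in at_top. norm (FF t k B) \<le> K * (1 + B^2) powr (-1/2)"
  proof (intro always_eventually allI)
    fix B :: real
    have "norm (FF t k B) \<le> \<bar>- ((real k + 1)^2 * (cos (t * B) * PP (Suc k) B))\<bar> + \<bar>t * (sin (t * B) * PP k B)\<bar>"
      unfolding FF_def real_norm_def by (rule abs_triangle_ineq)
    also have "\<dots> = (real k + 1)^2 * (\<bar>cos (t * B)\<bar> * \<bar>PP (Suc k) B\<bar>) + \<bar>t\<bar> * (\<bar>sin (t * B)\<bar> * \<bar>PP k B\<bar>)"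
      by (simp add: abs_mult)
    also have "\<dots> \<le> (real k + 1)^2 * (1 * (beta (Suc k) * (1 + B^2) powr (-1/2))) + \<bar>t\<bar> * (1 * (beta k * (1 + B^2) powr (-1/2)))"
      by (intro add_mono mult_left_mono mult_mono PP_bound_half) auto
    also have "\<dots> = K * (1 + B^2) powr (-1/2)" unfolding K_def by (simp add: algebra_simps)
    finally show "norm (FF t k B) \<le> K * (1 + B^2) powr (-1/2)" .
  qed
qed

lemma JJ_step:
  assumes k: "even k" and L: "(JJ t k \<longlongrightarrow> L) at_top"
  shows "(JJ t (Suc (Suc k)) \<longlongrightarrow> - (t^2 * L) / ((real k + 1)^2 * (real k + 2)^2)) at_top"
proof -
  define c where "c = (real k + 1)^2 * (real k + 2)^2"
  have c: "c > 0" unfolding c_def by simp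
  have "((\<lambda>B. (FF t k B - FF t k 0 - t^2 * JJ t k B) / c) \<longlongrightarrow> (0 - 0 - t^2 * L) / c) at_top"
    using FF_0[OF k, of t] by (intro tendsto_intros FF_lim L) (use c in auto)
  moreover have "\<forall>\<^sub>F B in at_top. (FF t k B - FF t k 0 - t^2 * JJ t k B) / c = JJ t (Suc (Suc k)) B"
    unfolding eventually_at_top_linorder
  proof (intro exI[of _ 0] allI impI)
    fix B :: real assume "B \<ge> 0"
    from IBP[OF this, of k t] c show "(FF t k B - FF t k 0 - t^2 * JJ t k B) / c = JJ t (Suc (Suc k)) B"
      unfolding c_def by (simp add: field_simps)
  qed
  ultimately show ?thesis unfolding c_def by (simp add: Lim_transform_eventually)
qed

definition LL :: "real \<Rightarrow> nat \<Rightarrow> real" where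
  "LL t j = (-1)^j * t^(2*j) / (fact (2*j))^2 * besselK0 t"

lemma JJ_lim:
  assumes t: "t > 0"
  shows "(JJ t (2*j) \<longlongrightarrow> LL t j) at_top"
proof (induction j)
  case 0
  have "JJ t 0 = (\<lambda>B. integral {0..B} (\<lambda>y. cos (t * y) * (1 + y^2) powr (-1/2)))"
    by (simp add: fun_eq_iff JJ_def PP_0)
  then show ?case using K0_cos_lim[OF t] by (simp add: LL_def)
next
  case (Suc j)
  have "(JJ t (Suc (Suc (2*j))) \<longlongrightarrow> - (t^2 * LL t j) / ((real (2*j) + 1)^2 * (real (2*j) + 2)^2)) at_top"
    by (rule JJ_step) (use Suc.IH in auto)
  moreover have "- (t^2 * LL t j) / ((real (2*j) + 1)^2 * (real (2*j) + 2)^2) = LL t (Suc j)"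
  proof -
    have f: "fact (2 * Suc j) = (real (2*j) + 2) * (real (2*j) + 1) * (fact (2*j) :: real)"
      by (simp add: fact_Suc algebra_simps)
    have tp: "t^(2 * Suc j) = t^2 * t^(2*j)" by (simp add: power_add[symmetric])
    have sp: "(-1::real)^(Suc j) = - ((-1)^j)" by simp
    have nz: "fact (2*j) \<noteq> (0::real)" "real (2*j) + 1 \<noteq> 0" "real (2*j) + 2 \<noteq> 0" by auto
    have sq: "((real (2*j) + 2) * (real (2*j) + 1) * fact (2*j))^2 = (real (2*j) + 1)^2 * (real (2*j) + 2)^2 * (fact (2*j))^2"
      by (simp add: power_mult_distrib)
    have gen: "\<And>T s P F2 K A2 B2 :: real. F2 \<noteq> 0 \<Longrightarrow> A2 \<noteq> 0 \<Longrightarrow> B2 \<noteq> 0 \<Longrightarrow>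
       - (T * (s * P / F2 * K)) / (B2 * A2) = - s * (T * P) / (B2 * A2 * F2) * K"
      by (simp add: field_simps)
    show ?thesis unfolding LL_def f tp sp sq by (rule gen) (use nz in auto)
  qed
  ultimately have "(JJ t (Suc (Suc (2*j))) \<longlongrightarrow> LL t (Suc j)) at_top" by simp
  moreover have e: "2 * Suc j = Suc (Suc (2*j))" by simp
  ultimately show ?case unfolding e by blast
qed

lemma exp_series_summable: "summable (\<lambda>n. \<bar>x\<bar>^n / fact n :: real)"
  using summable_exp[of "\<bar>x\<bar>"] by (simp add: divide_inverse mult.commute)

lemma sparse_sums:
  fixes f :: "nat \<Rightarrow> real"
  assumes "(\<lambda>j. f (2*j)) sums s" "\<And>n. odd n \<Longrightarrow> f n = 0"
  shows "f sums s"
proof -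
  have "strict_mono (\<lambda>j::nat. 2*j)" by (auto simp: strict_mono_def)
  moreover have "\<And>n. n \<notin> range (\<lambda>j::nat. 2*j) \<Longrightarrow> f n = 0"
    using assms(2) by (metis evenE rangeI)
  ultimately show ?thesis using sums_mono_reindex[of "\<lambda>j. 2*j" f s] assms(1) by simp
qed

lemma besselJ0_sparse:
  fixes u :: real
  shows "(\<lambda>i. alpha i * u^i) sums besselJ0 u"
proof -
  have sa: "summable (\<lambda>i. alpha i * u^i)"
  proof (rule summable_comparison_test'[OF exp_series_summable[of u]])
    fix n show "norm (alpha n * u^n) \<le> \<bar>u\<bar>^n / fact n"
      using alpha_bound[of n] by (simp add: abs_mult power_abs divide_inverse mult_right_mono mult.commute)
  qed
  have "(\<lambda>j. alpha (2*j) * u^(2*j)) sums (\<Sum>i. alpha i * u^i)"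
  proof -
    have "strict_mono (\<lambda>j::nat. 2*j)" by (auto simp: strict_mono_def)
    moreover have "\<And>n. n \<notin> range (\<lambda>j::nat. 2*j) \<Longrightarrow> alpha n * u^n = 0"
      by (metis alpha_odd evenE mult_zero_left rangeI)
    ultimately show ?thesis using sums_mono_reindex[of "\<lambda>j. 2*j" "\<lambda>i. alpha i * u^i"] sa by (simp add: summable_sums)
  qed
  moreover have "alpha (2*j) * u^(2*j) = (-1)^j * (u/2)^(2*j) / (fact j)^2" for j
  proof -
    have "(u/2)^(2*j) = u^(2*j) / 4^j" by (simp add: power_divide power_mult)
    then show ?thesis by (simp add: alpha_def)
  qed
  ultimately have "(\<lambda>j. (-1)^j * (u/2)^(2*j) / (fact j)^2) sums (\<Sum>i. alpha i * u^i)" by simp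
  then have "besselJ0 u = (\<Sum>i. alpha i * u^i)" unfolding besselJ0_def by (simp add: sums_iff)
  then show ?thesis using sa by (simp add: summable_sums)
qed

lemma cosh_sparse: "(\<lambda>n. if even n then v^n / fact n else 0) sums cosh (v::real)"
proof -
  have e: "\<And>n. v^n /\<^sub>R fact n = v^n / fact n" by (simp add: divide_inverse_commute)
  show ?thesis using cosh_converges[of v] unfolding e .
qed

lemma PP_qq: "PP k y = (1 + y^2) powr (-1/2) * (qq k y / (1 + y^2)^k)"
proof -
  have A: "1 + y^2 > 0" by (rule A_pos)
  have e: "- real k - 1/2 = -1/2 - real k" by simp
  have "(1 + y^2) powr (- real k - 1/2) = (1 + y^2) powr (-1/2) / (1 + y^2) powr (real k)"
    unfolding e by (rule powr_diff)
  also have "(1 + y^2) powr (real k) = (1 + y^2)^k" using A by (rule powr_realpow)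
  finally show ?thesis unfolding PP_def by simp
qed

lemma series_identity:
  fixes c y :: real
  shows "(\<lambda>k. if even k then c^k * PP k y else 0) sums
         ((1 + y^2) powr (-1/2) * (besselJ0 (c / (1 + y^2)) * cosh (c * y / (1 + y^2))))"
proof -
  define A where "A = 1 + y^2"
  have A: "A > 0" unfolding A_def by (rule A_pos)
  define u where "u = c / A"
  define v where "v = c * y / A"
  define a where "a i = alpha i * u^i" for i
  define b where "b n = (if even n then v^n / fact n else 0)" for n
  have na: "summable (\<lambda>i. norm (a i))"
  proof (rule summable_comparison_test'[OF exp_series_summable[of u]])
    fix n show "norm (norm (a n)) \<le> \<bar>u\<bar>^n / fact n"
      using alpha_bound[of n] by (simp add: a_def abs_mult power_abs divide_inverse mult_right_mono mult.commute)
  qed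
  have nb: "summable (\<lambda>n. norm (b n))"
  proof (rule summable_comparison_test'[OF exp_series_summable[of v]])
    fix n show "norm (norm (b n)) \<le> \<bar>v\<bar>^n / fact n"
      by (simp add: b_def abs_mult power_abs)
  qed
  have sa: "a sums besselJ0 u" unfolding a_def by (rule besselJ0_sparse)
  have sb: "b sums cosh v" unfolding b_def by (rule cosh_sparse)
  have cp: "(\<lambda>k. \<Sum>i\<le>k. a i * b (k - i)) sums ((\<Sum>k. a k) * (\<Sum>k. b k))"
    by (rule Cauchy_product_sums[OF na nb])
  have tm: "(\<Sum>i\<le>k. a i * b (k - i)) = (if even k then c^k * (qq k y / A^k) else 0)" for k
  proof (cases "even k")
    case True
    have "(\<Sum>i\<le>k. a i * b (k - i)) = (\<Sum>i\<le>k. c^k * (alpha i * y^(k-i) / fact (k-i) / A^k))"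
    proof (intro sum.cong refl)
      fix i assume i: "i \<in> {..k}"
      show "a i * b (k - i) = c^k * (alpha i * y^(k-i) / fact (k-i) / A^k)"
      proof (cases "even i")
        case True
        then have ev: "even (k - i)" using \<open>even k\<close> i by auto
        have "u^i * v^(k-i) = c^k * y^(k-i) / A^k"
          unfolding u_def v_def using i
          by (simp add: power_divide power_mult_distrib power_add[symmetric] field_simps)
        then show ?thesis unfolding a_def b_def using ev by (simp add: field_simps)
      next
        case False
        then show ?thesis by (simp add: a_def alpha_odd)
      qed
    qed
    also have "\<dots> = c^k * (qq k y / A^k)"
      unfolding qq_def by (simp add: sum_distrib_left sum_divide_distrib)
    finally show ?thesis using True by simp
  next
    case False
    have "(\<Sum>i\<le>k. a i * b (k - i)) = 0"
    proof (intro sum.neutral ballI)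
      fix i assume i: "i \<in> {..k}"
      show "a i * b (k - i) = 0"
      proof (cases "even i")
        case True
        then have "odd (k - i)" using False i by auto
        then show ?thesis by (simp add: b_def)
      next
        case False
        then show ?thesis by (simp add: a_def alpha_odd)
      qed
    qed
    then show ?thesis using False by simp
  qed
  have "(\<lambda>k. if even k then c^k * (qq k y / A^k) else 0) sums (besselJ0 u * cosh v)"
    using cp unfolding tm using sa sb by (simp add: sums_iff)
  from sums_mult[OF this, of "A powr (-1/2)"]
  have "(\<lambda>k. A powr (-1/2) * (if even k then c^k * (qq k y / A^k) else 0)) sums (A powr (-1/2) * (besselJ0 u * cosh v))" .
  moreover have "A powr (-1/2) * (if even k then c^k * (qq k y / A^k) else 0) = (if even k then c^k * PP k y else 0)" for k
    unfolding PP_qq A_def by simp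
  ultimately show ?thesis unfolding u_def v_def A_def by simp
qed

lemma inv_A_integral: "((\<lambda>y::real. 1 / (1 + y^2)) has_integral (pi/2)) {0..}"
proof (rule has_integral_to_inf)
  show "(\<lambda>y::real. 1 / (1 + y^2)) integrable_on {0..y}" for y
    by (intro integrable_continuous_interval continuous_intros) (metis A_pos less_irrefl)
  show "0 \<le> 1 / (1 + y^2)" for y :: real using A_pos[of y] by simp
  have "\<forall>\<^sub>F y in at_top. arctan y = integral {0..y} (\<lambda>y::real. 1 / (1 + y^2))"
    unfolding eventually_at_top_linorder
  proof (intro exI[of _ 0] allI impI)
    fix y :: real assume y: "y \<ge> 0"
    have "((\<lambda>y::real. 1 / (1 + y^2)) has_integral (arctan y - arctan 0)) {0..y}"
      using y by (intro ftc_real) (auto intro!: derivative_eq_intros DERIV_arctan[THEN DERIV_cong] simp: divide_inverse)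
    then show "arctan y = integral {0..y} (\<lambda>y::real. 1 / (1 + y^2))" by (simp add: integral_unique)
  qed
  then show "((\<lambda>y. integral {0..y} (\<lambda>y::real. 1 / (1 + y^2))) \<longlongrightarrow> pi/2) at_top"
    using tendsto_arctan_at_top by (rule Lim_transform_eventually[rotated])
qed

lemma ber_series:
  fixes a t :: real
  assumes t: "t > 0"
  defines "c \<equiv> (1/4) * a^2"
  shows "(\<lambda>j. (-1)^j * (c*t)^(2*j) / (fact (2*j))^2) sums ber (a * sqrt t)"
proof -
  have s: "summable (\<lambda>j. (-1)^j * (c*t)^(2*j) / (fact (2*j))^2)"
  proof (rule summable_comparison_test'[OF exp_series_summable[of "(c*t)^2"]])
    fix n
    have f1: "fact n \<le> (fact (2*n) :: real)" by (intro fact_mono) auto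
    have f0: "(1::real) \<le> fact (2*n)" by (rule fact_ge_1)
    have f2: "fact (2*n) \<le> (fact (2*n) :: real)^2"
      using mult_left_mono[OF f0 fact_ge_zero[of "2*n"]] by (simp add: power2_eq_square)
    have "\<bar>(c*t)^(2*n)\<bar> / (fact (2*n))^2 \<le> \<bar>(c*t)^(2*n)\<bar> / fact n"
      using f1 f2 by (intro divide_left_mono) auto
    then show "norm ((-1)^n * (c*t)^(2*n) / (fact (2*n))^2) \<le> \<bar>(c*t)^2\<bar>^n / fact n"
      by (simp add: abs_mult power_abs power_mult)
  qed
  have "(a * sqrt t / 2)^(4*j) = (c*t)^(2*j)" for j
  proof -
    have s2: "(sqrt t)^2 = t" using t by simp
    have "(sqrt t)^4 = ((sqrt t)^2)^2" by (simp add: power_mult[symmetric])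
    then have s4: "(sqrt t)^4 = t^2" using s2 by simp
    have "(a * sqrt t / 2)^4 = a^4 * (sqrt t)^4 / 16" by (simp add: power_mult_distrib power_divide)
    also have "\<dots> = (c*t)^2" unfolding s4 c_def by (simp add: power_mult_distrib power_divide power2_eq_square power4_eq_xxxx)
    finally have "(a * sqrt t / 2)^4 = (c*t)^2" .
    then show ?thesis by (metis power_mult mult.commute)
  qed
  then have "ber (a * sqrt t) = (\<Sum>j. (-1)^j * (c*t)^(2*j) / (fact (2*j))^2)"
    unfolding ber_def by simp
  then show ?thesis using s by (simp add: summable_sums)
qed

theorem mainTheorem7:
  fixes a t :: real
  assumes "t > 0"
  shows "((\<lambda>y. (1 + y^2) powr (-1/2) * besselJ0 ((1/4) * a^2 / (1 + y^2))
              * cosh ((1/4) * a^2 * y / (1 + y^2)) * cos (t * y))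
          has_integral (besselK0 t * ber (a * sqrt t))) {0..}"
proof -
  have t: "t > 0" by fact
  define c where "c = (1/4) * a^2"
  have c0: "c \<ge> 0" unfolding c_def by simp
  define T where "T k y = (if even k then c^k * PP k y else 0)" for k y
  define G where "G y = (1 + y^2) powr (-1/2) * (besselJ0 (c / (1 + y^2)) * cosh (c * y / (1 + y^2)))" for y
  have TG: "(\<lambda>k. T k y) sums G y" for y
    unfolding T_def G_def by (rule series_identity)
  define S where "S = (\<Sum>k. c^k * beta k)"
  have Ssum: "summable (\<lambda>k. c^k * beta k)" by (rule beta_summable[OF c0])
  have Tint: "((\<lambda>y. T (Suc k) y * cos (t*y)) has_integral (if even (Suc k) then c^(Suc k) * LL t (Suc k div 2) else 0)) {0..}" for k
  proof (cases "even (Suc k)")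
    case True
    from True obtain j where j: "Suc k = 2*j" by (rule evenE)
    have "((\<lambda>y. cos (t * y) * PP (2*j) y) has_integral LL t j) {0..}"
      by (rule improper_from_lim[OF cosPP_int]) (use JJ_lim[OF t, of j] in \<open>simp add: JJ_def[abs_def]\<close>)
    from has_integral_mult_right[OF this, of "c^(Suc k)"]
    have "((\<lambda>y. c^(Suc k) * (cos (t * y) * PP (2*j) y)) has_integral c^(Suc k) * LL t j) {0..}" .
    moreover have e1: "(\<lambda>y. T (Suc k) y * cos (t*y)) = (\<lambda>y. c^(Suc k) * (cos (t * y) * PP (2*j) y))"
      unfolding T_def using True j by (simp add: fun_eq_iff mult_ac)
    moreover have e2: "(if even (Suc k) then c^(Suc k) * LL t (Suc k div 2) else 0) = c^(Suc k) * LL t j"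
      using True j by simp
    ultimately show ?thesis by (simp only: e1 e2)
  next
    case False
    then show ?thesis unfolding T_def by simp
  qed
  define g where "g N y = (\<Sum>k<N. T (Suc k) y * cos (t*y))" for N y
  define V where "V N = (\<Sum>k<N. (if even (Suc k) then c^(Suc k) * LL t (Suc k div 2) else 0))" for N
  have gint: "(g N has_integral V N) {0..}" for N
    unfolding g_def V_def by (intro has_integral_sum Tint) auto
  have hint: "(\<lambda>y. S / (1 + y^2)) integrable_on {0..}"
  proof -
    have "((\<lambda>y. S * (1 / (1 + y^2))) has_integral S * (pi/2)) {0..}"
      by (intro has_integral_mult_right inv_A_integral)
    then show ?thesis by (auto simp: integrable_on_def)
  qed
  have bound: "\<forall>y\<in>{0..}. norm (g N y) \<le> S / (1 + y^2)" for N
  proof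
    fix y :: real assume "y \<in> {0..}"
    have A: "1 + y^2 > 0" by (rule A_pos)
    have "norm (g N y) \<le> (\<Sum>k<N. \<bar>T (Suc k) y * cos (t*y)\<bar>)"
      unfolding g_def real_norm_def by (rule sum_abs)
    also have "\<dots> \<le> (\<Sum>k<N. c^(Suc k) * beta (Suc k) / (1 + y^2))"
    proof (intro sum_mono)
      fix k
      have "\<bar>T (Suc k) y\<bar> \<le> c^(Suc k) * (beta (Suc k) / (1 + y^2))"
      proof (cases "even (Suc k)")
        case True
        then have "\<bar>T (Suc k) y\<bar> = c^(Suc k) * \<bar>PP (Suc k) y\<bar>" unfolding T_def using c0 by (simp add: abs_mult)
        also have "\<dots> \<le> c^(Suc k) * (beta (Suc k) / (1 + y^2))"
          using c0 by (intro mult_left_mono PP_bound_one) auto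
        finally show ?thesis .
      next
        case False
        then show ?thesis unfolding T_def using c0 A beta_nonneg[of "Suc k"] by simp
      qed
      moreover have "\<bar>cos (t*y)\<bar> \<le> 1" by simp
      ultimately have "\<bar>T (Suc k) y\<bar> * \<bar>cos (t*y)\<bar> \<le> c^(Suc k) * (beta (Suc k) / (1 + y^2)) * 1"
        by (intro mult_mono) auto
      then show "\<bar>T (Suc k) y * cos (t*y)\<bar> \<le> c^(Suc k) * beta (Suc k) / (1 + y^2)"
        by (simp add: abs_mult)
    qed
    also have "\<dots> = (\<Sum>k<N. c^(Suc k) * beta (Suc k)) / (1 + y^2)"
      by (simp add: sum_divide_distrib)
    also have "\<dots> \<le> S / (1 + y^2)"
    proof (intro divide_right_mono)
      have "(\<Sum>k<N. c^(Suc k) * beta (Suc k)) = (\<Sum>k<Suc N. c^k * beta k) - c^0 * beta 0"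
        by (subst sum.lessThan_Suc_shift) simp
      also have "\<dots> \<le> (\<Sum>k<Suc N. c^k * beta k)" using beta_nonneg[of 0] by simp
      also have "\<dots> \<le> S" unfolding S_def
        by (intro sum_le_suminf Ssum) (auto intro!: mult_nonneg_nonneg beta_nonneg simp: c0)
      finally show "(\<Sum>k<N. c^(Suc k) * beta (Suc k)) \<le> S" .
    qed (use A in auto)
    finally show "norm (g N y) \<le> S / (1 + y^2)" .
  qed
  have lim_pt: "\<forall>y\<in>{0..}. (\<lambda>N. g N y) \<longlonglongrightarrow> (G y - PP 0 y) * cos (t*y)"
  proof
    fix y :: real assume "y \<in> {0..}"
    have "(\<lambda>k. T (Suc k) y) sums (G y - T 0 y)"
      using TG[of y] sums_Suc_iff[of "\<lambda>k. T k y" "G y - T 0 y"] by simp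
    then have "(\<lambda>k. T (Suc k) y * cos (t*y)) sums ((G y - PP 0 y) * cos (t*y))"
      using sums_mult2 unfolding T_def by fastforce
    then show "(\<lambda>N. g N y) \<longlonglongrightarrow> (G y - PP 0 y) * cos (t*y)"
      unfolding g_def sums_def .
  qed
  define W where "W k = (if even k then c^k * LL t (k div 2) else 0)" for k
  define w where "w j = (-1)^j * (c*t)^(2*j) / (fact (2*j))^2" for j
  have wb: "w sums ber (a * sqrt t)" unfolding w_def c_def by (rule ber_series[OF t])
  have "W sums (ber (a * sqrt t) * besselK0 t)"
  proof (rule sparse_sums)
    have "W (2*j) = w j * besselK0 t" for j
      unfolding W_def w_def LL_def by (simp add: power_mult_distrib)
    then show "(\<lambda>j. W (2*j)) sums (ber (a * sqrt t) * besselK0 t)"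
      using sums_mult2[OF wb] by simp
    show "\<And>n. odd n \<Longrightarrow> W n = 0" unfolding W_def by simp
  qed
  then have "(\<lambda>k. W (Suc k)) sums (ber (a * sqrt t) * besselK0 t - W 0)"
    using sums_Suc_iff[of W] by simp
  moreover have "W 0 = besselK0 t" unfolding W_def LL_def by simp
  ultimately have Vlim: "V \<longlonglongrightarrow> ber (a * sqrt t) * besselK0 t - besselK0 t"
    unfolding V_def sums_def W_def by simp
  have part1: "((\<lambda>y. (G y - PP 0 y) * cos (t*y)) has_integral (ber (a * sqrt t) * besselK0 t - besselK0 t)) {0..}"
    by (rule has_integral_dominated_convergence[OF gint hint bound lim_pt Vlim])
  have part0: "((\<lambda>y. cos (t * y) * PP 0 y) has_integral besselK0 t) {0..}"
    by (rule improper_from_lim[OF cosPP_int]) (use JJ_lim[OF t, of 0] in \<open>simp add: JJ_def[abs_def] LL_def\<close>)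
  have "((\<lambda>y. (G y - PP 0 y) * cos (t*y) + cos (t * y) * PP 0 y) has_integral
      (ber (a * sqrt t) * besselK0 t - besselK0 t + besselK0 t)) {0..}"
    by (rule has_integral_add[OF part1 part0])
  moreover have "(G y - PP 0 y) * cos (t*y) + cos (t * y) * PP 0 y =
      (1 + y^2) powr (-1/2) * besselJ0 ((1/4) * a^2 / (1 + y^2)) * cosh ((1/4) * a^2 * y / (1 + y^2)) * cos (t * y)" for y
    unfolding G_def c_def by (simp add: algebra_simps)
  ultimately show ?thesis by (simp add: mult.commute)
qed

end
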